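(* Let $\delta\in(0,1)$, $\epsilon\in\mathbb{R}$, $\sigma>0$, and let $R:\mathcal{S}\times\mathcal{W}\to\mathbb{R}^+$, $(s,w)\mapsto R_{s,w}$, satisfy $R_{\max}:=\sup_{s,w}R_{s,w}<\infty$. Suppose the learning algorithm $\mathcal{A}$ is $(R_{S,W},\epsilon,\delta;d_m)$-compressible, and that for every $w\in\mathcal{W}$ the random variable $\ell(Z,w)$, $Z\sim\mu$, is $\sigma$-subgaussian. Then, with probability at least $1-\delta$ over $(S,W)\sim P_{S,W}$, $$\mathrm{gen}(S,W)\le \sqrt{\frac{4\sigma^2\big(R_{S,W}+\log(\sqrt{2n}/\delta)\big)}{2n-1}+\epsilon}.$$
   Context: Setup: $\mathcal{Z}$ is a data space, $\mathcal{W}$ a hypothesis space, $\ell:\mathcal{Z}\times\mathcal{W}\to\mathbb{R}^+$ a loss, $\mu$ an unknown distribution on $\mathcal{Z}$, and $S=(Z_1,\dots,Z_n)\sim P_S=\mu^{\otimes n}$ a training set in $\mathcal{S}=\mathcal{Z}^n$. A (possibly stochastic) algorithm $\mathcal{A}$ outputs $W=\mathcal{A}(S)\in\mathcal{W}$, inducing a conditional $P_{W|S}$ and joint $P_{S,W}$. Population risk $\mathcal{L}(w)=\mathbb{E}_{Z\sim\mu}[\ell(Z,w)]$, empirical risk $\hat{\mathcal{L}}(s,w)=\frac1n\sum_{i=1}^n\ell(z_i,w)$, generalization error $\mathrm{gen}(s,w)=\mathcal{L}(w)-\hat{\mathcal{L}}(s,w)$. All logarithms are natural. A real random variable $X$ is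 $\sigma$-subgaussian if $\log\mathbb{E}[e^{\lambda(X-\mathbb{E}X)}]\le\lambda^2\sigma^2/2$ for all $\lambda\in\mathbb{R}$. Fix a set $\hat{\mathcal{W}}\subseteq\mathcal{W}$. Distortion: $d(w,\hat w;s)=\mathrm{gen}(s,w)^2-\mathrm{gen}(s,\hat w)^2$, and for $s^m=(s_1,\dots,s_m)$, $w^m$, $\hat w^m$, $d_m(w^m,\hat w^m;s^m)=\frac1m\sum_{i=1}^m d(w_i,\hat w_i;s_i)$. $\mathbb{P}_{(S,W)^{\otimes m}}$ denotes probability when $(S_i,W_i)$, $i\in[m]$, are i.i.d. $\sim P_{S,W}$. Variable-size compressibility: $\mathcal{A}$ is $(R_{S,W},\epsilon,\delta;d_m)$-compressible (for $R$ as in the claim, $\epsilon\in\mathbb{R}$, $\delta>0$) if there exists a sequence of hypothesis books $\mathcal{H}_m=\{\hat{\mathbf{w}}[j]: j\in[\lfloor e^{mR_{\max}}\rfloor]\}\subseteq\hat{\mathcal{W}}^m$, $m\in\mathbb{N}$, such that $$\liminf_{m\to\infty}\Big[-\frac1m\log\mathbb{P}_{(S,W)^{\otimes m}}\Big(\min_{j\le e^{\sum_{i=1}^m R_{S_i,W_i}}} d_m(W^m,\hat{\mathbf{w}}[j];S^m)>\epsilon\Big)\Big]\ge\log(1/\delta).$$ *)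

theory Defs
  imports "HOL-Probability.Probability"
begin

text \<open>Training sets s are functions nat => 'z (only indices < n matter), hypotheses have type 'w.\<close>

definition subgaussian :: "'a measure \<Rightarrow> ('a \<Rightarrow> real) \<Rightarrow> real \<Rightarrow> bool" where
  "subgaussian M X \<sigma> \<longleftrightarrow> integrable M X \<and>
     (\<forall>l::real. integrable M (\<lambda>x. exp (l * (X x - (\<integral>y. X y \<partial>M)))) \<and>
        ln (\<integral>x. exp (l * (X x - (\<integral>y. X y \<partial>M))) \<partial>M) \<le> l\<^sup>2 * \<sigma>\<^sup>2 / 2)"

definition pop_risk :: "'z measure \<Rightarrow> ('z \<Rightarrow> 'w \<Rightarrow> real) \<Rightarrow> 'w \<Rightarrow> real" where
  "pop_risk \<mu> loss w = (\<integral>z. loss z w \<partial>\<mu>)"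

definition emp_risk :: "nat \<Rightarrow> ('z \<Rightarrow> 'w \<Rightarrow> real) \<Rightarrow> (nat \<Rightarrow> 'z) \<Rightarrow> 'w \<Rightarrow> real" where
  "emp_risk n loss s w = (\<Sum>i<n. loss (s i) w) / real n"

definition gen :: "'z measure \<Rightarrow> nat \<Rightarrow> ('z \<Rightarrow> 'w \<Rightarrow> real) \<Rightarrow> (nat \<Rightarrow> 'z) \<Rightarrow> 'w \<Rightarrow> real" where
  "gen \<mu> n loss s w = pop_risk \<mu> loss w - emp_risk n loss s w"

definition distortion :: "'z measure \<Rightarrow> nat \<Rightarrow> ('z \<Rightarrow> 'w \<Rightarrow> real) \<Rightarrow> 'w \<Rightarrow> 'w \<Rightarrow> (nat \<Rightarrow> 'z) \<Rightarrow> real" where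
  "distortion \<mu> n loss w wh s = (gen \<mu> n loss s w)\<^sup>2 - (gen \<mu> n loss s wh)\<^sup>2"

definition distortion_m :: "'z measure \<Rightarrow> nat \<Rightarrow> ('z \<Rightarrow> 'w \<Rightarrow> real) \<Rightarrow> nat \<Rightarrow>
    (nat \<Rightarrow> 'w) \<Rightarrow> (nat \<Rightarrow> 'w) \<Rightarrow> (nat \<Rightarrow> (nat \<Rightarrow> 'z)) \<Rightarrow> real" where
  "distortion_m \<mu> n loss m ws whs ss = (\<Sum>i<m. distortion \<mu> n loss (ws i) (whs i) (ss i)) / real m"

definition neg_log_rate :: "nat \<Rightarrow> real \<Rightarrow> ereal" where
  "neg_log_rate m p = (if p = 0 then \<infinity> else ereal (- ln p / real m))"

definition Rmax :: "('s \<times> 'w) measure \<Rightarrow> ('s \<times> 'w \<Rightarrow> real) \<Rightarrow> real" where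
  "Rmax PSW R = (SUP x\<in>space PSW. R x)"

text \<open>Variable-size compressibility. book m j is the j-th hypothesis vector of the m-th book
  (coordinates i < m), for j in [floor(exp(m Rmax))].\<close>
definition compressible ::
  "'z measure \<Rightarrow> nat \<Rightarrow> ('z \<Rightarrow> 'w \<Rightarrow> real) \<Rightarrow> ((nat \<Rightarrow> 'z) \<times> 'w) measure \<Rightarrow> 'w set \<Rightarrow>
   ((nat \<Rightarrow> 'z) \<times> 'w \<Rightarrow> real) \<Rightarrow> real \<Rightarrow> real \<Rightarrow> bool" where
  "compressible \<mu> n loss PSW What R \<epsilon> \<delta> \<longleftrightarrow>
    (\<exists>book :: nat \<Rightarrow> nat \<Rightarrow> nat \<Rightarrow> 'w.
      (\<forall>m j i. 1 \<le> j \<and> j \<le> nat \<lfloor>exp (real m * Rmax PSW R)\<rfloor> \<and> i < m \<longrightarrow> book m j i \<in> What) \<and>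
      liminf (\<lambda>m. neg_log_rate m
        (measure (PiM {..<m} (\<lambda>_. PSW))
          {x \<in> space (PiM {..<m} (\<lambda>_. PSW)).
             \<forall>j \<in> {1..nat \<lfloor>exp (real m * Rmax PSW R)\<rfloor>}.
               real j \<le> exp (\<Sum>i<m. R (x i)) \<longrightarrow>
               distortion_m \<mu> n loss m (\<lambda>i. snd (x i)) (book m j) (\<lambda>i. fst (x i)) > \<epsilon>}))
       \<ge> ereal (ln (1 / \<delta>)))"

end

theory Submission
  imports Defs
begin

lemma nn_normal: "s > 0 \<Longrightarrow> (\<integral>\<^sup>+g. ennreal (normal_density m s g) \<partial>lborel) = 1"
  by (subst nn_integral_eq_integral) (auto simp: normal_density_nonneg integrable_normal_density integral_normal_density)

lemma gauss_mgf: "(\<integral>\<^sup>+g. ennreal (exp (b*g) * std_normal_density g) \<partial>lborel) = ennreal (exp (b\<^sup>2/2))"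
proof -
  have eq: "exp (b*g) * std_normal_density g = exp (b\<^sup>2/2) * normal_density b 1 g" for g
  proof -
    have a: "b*g + - g\<^sup>2 / 2 = b\<^sup>2/2 + - (g - b)\<^sup>2 / 2"
      by (simp add: power2_eq_square field_simps)
    have "exp (b*g) * exp (- g\<^sup>2 / 2) = exp (b\<^sup>2/2) * exp (- (g - b)\<^sup>2 / 2)"
      unfolding mult_exp_exp a ..
    then show ?thesis unfolding std_normal_density_def normal_density_def by simp
  qed
  have "(\<integral>\<^sup>+g. ennreal (exp (b*g) * std_normal_density g) \<partial>lborel)
      = (\<integral>\<^sup>+g. ennreal (exp (b\<^sup>2/2)) * ennreal (normal_density b 1 g) \<partial>lborel)"
    by (simp add: eq ennreal_mult)
  also have "\<dots> = ennreal (exp (b\<^sup>2/2))"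
    by (subst nn_integral_cmult) (auto simp: nn_normal)
  finally show ?thesis .
qed

lemma gauss_sq:
  assumes "0 \<le> k" "k < 1/2"
  shows "(\<integral>\<^sup>+g. ennreal (std_normal_density g * exp (k * g\<^sup>2)) \<partial>lborel) = ennreal (1 / sqrt (1 - 2*k))"
proof -
  define s where "s = 1 / sqrt (1 - 2*k)"
  have pos: "1 - 2*k > 0" using assms by simp
  have spos: "s > 0" using pos by (simp add: s_def)
  have s2: "s\<^sup>2 = 1 / (1 - 2*k)" using pos by (simp add: s_def power_divide)
  have eq: "std_normal_density g * exp (k * g\<^sup>2) = s * normal_density 0 s g" for g
  proof -
    have e: "exp (- g\<^sup>2 / 2) * exp (k * g\<^sup>2) = exp (-(g - 0)\<^sup>2 / (2 * s\<^sup>2))"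
      unfolding mult_exp_exp s2 using pos by (simp add: field_simps)
    have h: "1 / sqrt (2 * pi) = s * (1 / sqrt (2 * pi * s\<^sup>2))"
      using pos by (simp add: s_def real_sqrt_mult real_sqrt_divide field_simps)
    have "std_normal_density g * exp (k * g\<^sup>2) = (1 / sqrt (2 * pi)) * (exp (- g\<^sup>2 / 2) * exp (k * g\<^sup>2))"
      unfolding std_normal_density_def by (simp only: mult.assoc)
    also have "\<dots> = s * (1 / sqrt (2 * pi * s\<^sup>2) * exp (-(g - 0)\<^sup>2 / (2 * s\<^sup>2)))"
      unfolding e h by (simp only: mult.assoc)
    finally show ?thesis unfolding normal_density_def .
  qed
  have "(\<integral>\<^sup>+g. ennreal (std_normal_density g * exp (k * g\<^sup>2)) \<partial>lborel)
      = (\<integral>\<^sup>+g. ennreal s * ennreal (normal_density 0 s g) \<partial>lborel)"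
    using spos by (intro nn_integral_cong) (simp add: eq ennreal_mult)
  also have "\<dots> = ennreal s"
    using spos by (subst nn_integral_cmult) (auto simp: nn_normal)
  finally show ?thesis by (simp add: s_def)
qed


lemma exp_sq_bound:
  fixes M :: "'a measure" and X :: "'a \<Rightarrow> real"
  assumes M: "prob_space M" and Xm[measurable]: "X \<in> borel_measurable M"
    and mgf: "\<And>t. (\<integral>\<^sup>+x. ennreal (exp (t * X x)) \<partial>M) \<le> ennreal (exp (t\<^sup>2 * v / 2))"
    and lam: "lam \<ge> 0" and v: "v \<ge> 0" and k: "lam * v < 1/2"
  shows "(\<integral>\<^sup>+x. ennreal (exp (lam * (X x)\<^sup>2)) \<partial>M) \<le> ennreal (1 / sqrt (1 - 2 * (lam * v)))"
proof -
  interpret M: prob_space M by fact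
  interpret P: pair_sigma_finite M lborel
    by (intro pair_sigma_finite.intro M.sigma_finite_measure_axioms lborel.sigma_finite_measure_axioms)
  define a where "a = sqrt (2 * lam)"
  have a2: "a\<^sup>2 = 2 * lam" using lam by (simp add: a_def)
  have e1: "ennreal (exp (lam * (X x)\<^sup>2)) = (\<integral>\<^sup>+g. ennreal (exp ((a * X x) * g) * std_normal_density g) \<partial>lborel)" for x
    unfolding gauss_mgf by (simp add: power_mult_distrib a2)
  have "(\<integral>\<^sup>+x. ennreal (exp (lam * (X x)\<^sup>2)) \<partial>M)
      = (\<integral>\<^sup>+x. (\<integral>\<^sup>+g. ennreal (exp ((a * X x) * g) * std_normal_density g) \<partial>lborel) \<partial>M)"
    by (simp add: e1)
  also have "\<dots> = (\<integral>\<^sup>+g. (\<integral>\<^sup>+x. ennreal (exp ((a * X x) * g) * std_normal_density g) \<partial>M) \<partial>lborel)"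
    by (rule P.Fubini'[symmetric]) measurable
  also have "\<dots> = (\<integral>\<^sup>+g. (\<integral>\<^sup>+x. ennreal (exp ((a * g) * X x)) \<partial>M) * ennreal (std_normal_density g) \<partial>lborel)"
    by (intro nn_integral_cong, subst nn_integral_multc[symmetric])
       (auto simp: ennreal_mult mult_ac intro!: nn_integral_cong)
  also have "\<dots> \<le> (\<integral>\<^sup>+g. ennreal (exp ((a * g)\<^sup>2 * v / 2)) * ennreal (std_normal_density g) \<partial>lborel)"
    by (intro nn_integral_mono mult_right_mono mgf) auto
  also have "\<dots> = (\<integral>\<^sup>+g. ennreal (std_normal_density g * exp ((lam * v) * g\<^sup>2)) \<partial>lborel)"
    by (intro nn_integral_cong) (simp add: ennreal_mult[symmetric] power_mult_distrib a2 mult_ac)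
  also have "\<dots> = ennreal (1 / sqrt (1 - 2 * (lam * v)))"
    by (rule gauss_sq) (use lam v k in auto)
  finally show ?thesis .
qed

lemma subg_mgf:
  assumes "prob_space M" and sg: "subgaussian M f \<sigma>"
  shows "(\<integral>\<^sup>+z. ennreal (exp (l * (f z - (\<integral>y. f y \<partial>M)))) \<partial>M) \<le> ennreal (exp (l\<^sup>2 * \<sigma>\<^sup>2 / 2))"
proof -
  interpret prob_space M by fact
  let ?g = "\<lambda>z. exp (l * (f z - (\<integral>y. f y \<partial>M)))"
  have int: "integrable M ?g" and ln: "ln (\<integral>x. ?g x \<partial>M) \<le> l\<^sup>2 * \<sigma>\<^sup>2 / 2"
    using sg unfolding subgaussian_def by auto
  have "(\<integral>\<^sup>+z. ennreal (?g z) \<partial>M) = ennreal (\<integral>x. ?g x \<partial>M)"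
    by (rule nn_integral_eq_integral) (use int in auto)
  also have "(\<integral>x. ?g x \<partial>M) \<le> exp (l\<^sup>2 * \<sigma>\<^sup>2 / 2)"
  proof (cases "(\<integral>x. ?g x \<partial>M) > 0")
    case True
    then show ?thesis using ln by (metis exp_le_cancel_iff exp_ln)
  next
    case False
    then show ?thesis by (smt (verit) exp_gt_zero)
  qed
  finally show ?thesis by (simp add: ennreal_leI)
qed

lemma gen_mgf:
  fixes \<mu> :: "'z measure" and loss :: "'z \<Rightarrow> 'w \<Rightarrow> real"
  assumes "prob_space \<mu>" and n: "n \<ge> 1"
    and fm[measurable]: "(\<lambda>z. loss z w) \<in> borel_measurable \<mu>"
    and sg: "subgaussian \<mu> (\<lambda>z. loss z w) \<sigma>"
  shows "(\<integral>\<^sup>+s. ennreal (exp (t * gen \<mu> n loss s w)) \<partial>(PiM {..<n} (\<lambda>_. \<mu>)))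
          \<le> ennreal (exp (t\<^sup>2 * (\<sigma>\<^sup>2 / real n) / 2))"
proof -
  interpret M: prob_space \<mu> by fact
  interpret PS: product_sigma_finite "\<lambda>_::nat. \<mu>"
    by (simp add: product_sigma_finite_def M.sigma_finite_measure_axioms)
  define L where "L = (\<integral>y. loss y w \<partial>\<mu>)"
  define l where "l = - t / real n"
  have gen_eq: "t * gen \<mu> n loss s w = (\<Sum>i<n. l * (loss (s i) w - L))" for s
  proof -
    have "(\<Sum>i<n. l * (loss (s i) w - L)) = l * (\<Sum>i<n. loss (s i) w) - l * real n * L"
      by (simp add: sum_distrib_left[symmetric] sum_subtractf algebra_simps)
    then show ?thesis using n
      by (simp add: gen_def pop_risk_def emp_risk_def L_def l_def field_simps)
  qed
  have "(\<integral>\<^sup>+s. ennreal (exp (t * gen \<mu> n loss s w)) \<partial>(PiM {..<n} (\<lambda>_. \<mu>)))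
      = (\<integral>\<^sup>+s. (\<Prod>i<n. ennreal (exp (l * (loss (s i) w - L)))) \<partial>(PiM {..<n} (\<lambda>_. \<mu>)))"
    by (simp add: gen_eq exp_sum prod_ennreal)
  also have "\<dots> = (\<Prod>i<n. (\<integral>\<^sup>+z. ennreal (exp (l * (loss z w - L))) \<partial>\<mu>))"
    by (rule PS.product_nn_integral_prod) auto
  also have "\<dots> \<le> (\<Prod>i<n. ennreal (exp (l\<^sup>2 * \<sigma>\<^sup>2 / 2)))"
    unfolding prod_constant
    by (intro power_mono subg_mgf[OF assms(1) sg, unfolded L_def[symmetric]]) auto
  also have "\<dots> = ennreal (exp (t\<^sup>2 * (\<sigma>\<^sup>2 / real n) / 2))"
  proof -
    have "(\<Prod>i<n. ennreal (exp (l\<^sup>2 * \<sigma>\<^sup>2 / 2))) = ennreal (exp (real n * (l\<^sup>2 * \<sigma>\<^sup>2 / 2)))"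
      using exp_of_nat_mult[of n "l\<^sup>2 * \<sigma>\<^sup>2 / 2"] by (simp add: ennreal_power)
    also have "real n * (l\<^sup>2 * \<sigma>\<^sup>2 / 2) = t\<^sup>2 * (\<sigma>\<^sup>2 / real n) / 2"
      using n by (simp add: l_def power2_eq_square field_simps)
    finally show ?thesis .
  qed
  finally show ?thesis .
qed

lemma gen_sq_bound:
  fixes \<mu> :: "'z measure" and loss :: "'z \<Rightarrow> 'w \<Rightarrow> real"
  assumes "prob_space \<mu>" and n: "n \<ge> 1" and \<sigma>: "\<sigma> > 0"
    and fm[measurable]: "(\<lambda>z. loss z w) \<in> borel_measurable \<mu>"
    and sg: "subgaussian \<mu> (\<lambda>z. loss z w) \<sigma>"
  shows "(\<integral>\<^sup>+s. ennreal (exp ((2 * real n - 1) / (4 * \<sigma>\<^sup>2) * (gen \<mu> n loss s w)\<^sup>2)) \<partial>(PiM {..<n} (\<lambda>_. \<mu>)))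
          \<le> ennreal (sqrt (2 * real n))"
proof -
  interpret M: prob_space \<mu> by fact
  have P: "prob_space (PiM {..<n} (\<lambda>_. \<mu>))" by (rule prob_space_PiM) (rule assms(1))
  have meas: "(\<lambda>s. gen \<mu> n loss s w) \<in> borel_measurable (PiM {..<n} (\<lambda>_. \<mu>))"
    unfolding gen_def emp_risk_def by measurable
  have kv: "(2 * real n - 1) / (4 * \<sigma>\<^sup>2) * (\<sigma>\<^sup>2 / real n) = (2 * real n - 1) / (4 * real n)"
    using n \<sigma> by (simp add: field_simps)
  have "(\<integral>\<^sup>+s. ennreal (exp ((2 * real n - 1) / (4 * \<sigma>\<^sup>2) * (gen \<mu> n loss s w)\<^sup>2)) \<partial>(PiM {..<n} (\<lambda>_. \<mu>)))
     \<le> ennreal (1 / sqrt (1 - 2 * ((2 * real n - 1) / (4 * \<sigma>\<^sup>2) * (\<sigma>\<^sup>2 / real n))))"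
    by (rule exp_sq_bound[OF P meas gen_mgf[of \<mu> n loss w \<sigma>, OF assms(1) n fm sg]]) (use n \<sigma> kv in auto)
  also have "1 / sqrt (1 - 2 * ((2 * real n - 1) / (4 * \<sigma>\<^sup>2) * (\<sigma>\<^sup>2 / real n))) = sqrt (2 * real n)"
  proof -
    have "1 - 2 * ((2 * real n - 1) / (4 * real n)) = 1 / (2 * real n)"
      using n by (simp add: field_simps)
    then show ?thesis unfolding kv by (simp add: real_sqrt_divide)
  qed
  finally show ?thesis .
qed


lemma ennreal_prod_le_pow:
  fixes f :: "nat \<Rightarrow> ennreal"
  assumes "\<And>i. i \<in> I \<Longrightarrow> f i \<le> c" "finite I"
  shows "(\<Prod>i\<in>I. f i) \<le> c ^ card I"
  using assms(2,1)
proof (induction I rule: finite_induct)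
  case empty then show ?case by simp
next
  case (insert x F)
  then have "f x * (\<Prod>i\<in>F. f i) \<le> c * c ^ card F"
    by (intro mult_mono) auto
  then show ?case using insert by simp
qed

lemma sum_comp_meas:
  assumes "\<And>i. i < m \<Longrightarrow> f i \<in> borel_measurable M"
  shows "(\<lambda>x. \<Sum>i<m. f i (x i) :: real) \<in> borel_measurable (PiM {..<m} (\<lambda>_. M))"
  using assms by (intro borel_measurable_sum measurable_compose[OF measurable_component_singleton]) auto

theorem theorem1:
  fixes \<mu> :: "'z measure" and MW :: "'w measure" and loss :: "'z \<Rightarrow> 'w \<Rightarrow> real"
    and n :: nat and PSW :: "((nat \<Rightarrow> 'z) \<times> 'w) measure" and What :: "'w set"
    and R :: "(nat \<Rightarrow> 'z) \<times> 'w \<Rightarrow> real" and \<delta> \<epsilon> \<sigma> :: real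
  assumes "prob_space \<mu>" and "n \<ge> 1"
    and "prob_space PSW"
    and "sets PSW = sets (PiM {..<n} (\<lambda>_. \<mu>) \<Otimes>\<^sub>M MW)"
    and "distr PSW (PiM {..<n} (\<lambda>_. \<mu>)) fst = PiM {..<n} (\<lambda>_. \<mu>)"
    and "What \<subseteq> space MW"
    and "(\<lambda>(z, w). loss z w) \<in> borel_measurable (\<mu> \<Otimes>\<^sub>M MW)"
    and "\<forall>z\<in>space \<mu>. \<forall>w\<in>space MW. loss z w \<ge> 0"
    and "R \<in> borel_measurable PSW"
    and "\<forall>x\<in>space PSW. R x \<ge> 0"
    and "bdd_above (R ` space PSW)"
    and "0 < \<delta>" and "\<delta> < 1" and "\<sigma> > 0"
    and "compressible \<mu> n loss PSW What R \<epsilon> \<delta>"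
    and "\<forall>w\<in>space MW. subgaussian \<mu> (\<lambda>z. loss z w) \<sigma>"
  shows "measure PSW {(s, w) \<in> space PSW.
            gen \<mu> n loss s w \<le> sqrt (4 * \<sigma>\<^sup>2 * (R (s, w) + ln (sqrt (2 * real n) / \<delta>)) / (2 * real n - 1) + \<epsilon>)}
         \<ge> 1 - \<delta>"
proof -
  note A = assms
  interpret PSW: prob_space PSW by fact
  interpret Mu: prob_space \<mu> by fact
  define Mn where "Mn = PiM {..<n} (\<lambda>_. \<mu>)"
  have n1: "real n \<ge> 1" using A(2) by simp
  have sets_eq: "sets PSW = sets (Mn \<Otimes>\<^sub>M MW)" using A(4) by (simp add: Mn_def)
  have tr_borel: "f \<in> borel_measurable (Mn \<Otimes>\<^sub>M MW) \<Longrightarrow> f \<in> borel_measurable PSW" for f :: "_ \<Rightarrow> real"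
    by (subst measurable_cong_sets[OF sets_eq refl])
  have fstm: "fst \<in> measurable PSW Mn"
    by (subst measurable_cong_sets[OF sets_eq refl]) (rule measurable_fst)
  have lossm[measurable]: "(\<lambda>(z, w). loss z w) \<in> borel_measurable (\<mu> \<Otimes>\<^sub>M MW)" by (rule A(7))
  have loss_w: "(\<lambda>z. loss z w) \<in> borel_measurable \<mu>" if w: "w \<in> space MW" for w
  proof -
    have "(\<lambda>z. (z, w)) \<in> measurable \<mu> (\<mu> \<Otimes>\<^sub>M MW)"
      using w by (intro measurable_Pair measurable_ident measurable_const) auto
    from measurable_compose[OF this lossm] show ?thesis by simp
  qed
  have popm: "(\<lambda>w. pop_risk \<mu> loss w) \<in> borel_measurable MW"
  proof -
    have "(\<lambda>(w, z). loss z w) \<in> borel_measurable (MW \<Otimes>\<^sub>M \<mu>)"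
      using lossm by (subst measurable_pair_swap_iff) (simp add: case_prod_beta')
    then have "case_prod (\<lambda>w z. loss z w) \<in> borel_measurable (MW \<Otimes>\<^sub>M \<mu>)" by simp
    from Mu.borel_measurable_lebesgue_integral[OF this] show ?thesis
      unfolding pop_risk_def by simp
  qed
  have genm[measurable]: "(\<lambda>p. gen \<mu> n loss (fst p) (snd p)) \<in> borel_measurable PSW"
  proof (rule tr_borel)
    have "(\<lambda>p. loss (fst p k) (snd p)) \<in> borel_measurable (Mn \<Otimes>\<^sub>M MW)" if "k < n" for k
    proof -
      have "(\<lambda>p. (fst p k, snd p)) \<in> measurable (Mn \<Otimes>\<^sub>M MW) (\<mu> \<Otimes>\<^sub>M MW)"
        using that unfolding Mn_def
        by (intro measurable_Pair measurable_compose[OF measurable_fst measurable_component_singleton] measurable_snd) auto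
      from measurable_compose[OF this lossm] show ?thesis by simp
    qed
    moreover have "(\<lambda>p. pop_risk \<mu> loss (snd p)) \<in> borel_measurable (Mn \<Otimes>\<^sub>M MW)"
      using popm by measurable
    ultimately show "(\<lambda>p. gen \<mu> n loss (fst p) (snd p)) \<in> borel_measurable (Mn \<Otimes>\<^sub>M MW)"
      unfolding gen_def emp_risk_def
      by (intro borel_measurable_diff borel_measurable_divide borel_measurable_sum) auto
  qed
  have genw: "(\<lambda>p. gen \<mu> n loss (fst p) w) \<in> borel_measurable PSW" if w: "w \<in> space MW" for w
  proof -
    note [measurable] = loss_w[OF w]
    have "(\<lambda>s. gen \<mu> n loss s w) \<in> borel_measurable Mn"
      unfolding gen_def emp_risk_def Mn_def by measurable
    from measurable_compose[OF fstm this] show ?thesis .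
  qed
  have Rm[measurable]: "R \<in> borel_measurable PSW" by (rule A(9))
  define K where "K = Rmax PSW R"
  have Rle: "R x \<le> K" if "x \<in> space PSW" for x
    unfolding K_def Rmax_def using A(11) that by (rule cSUP_upper2) simp
  have K0: "K \<ge> 0"
  proof -
    obtain x where "x \<in> space PSW" using PSW.not_empty by blast
    then have "0 \<le> R x" "R x \<le> K" using Rle A(10) by auto
    then show ?thesis by linarith
  qed
  define lam where "lam = (2 * real n - 1) / (4 * \<sigma>\<^sup>2)"
  define a where "a = ln (sqrt (2 * real n) / \<delta>)"
  have ea: "exp a = sqrt (2 * real n) / \<delta>" unfolding a_def using A(12) n1 by simp
  define X where "X p = 4 * \<sigma>\<^sup>2 * (R p + a) / (2 * real n - 1) + \<epsilon>" for p
  define B where "B = {p \<in> space PSW. X p < (gen \<mu> n loss (fst p) (snd p))\<^sup>2}"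
  have Bm: "B \<in> sets PSW" unfolding B_def X_def by measurable
  from A(15) obtain book :: "nat \<Rightarrow> nat \<Rightarrow> nat \<Rightarrow> 'w" where
    bk: "\<forall>m j i. 1 \<le> j \<and> j \<le> nat \<lfloor>exp (real m * Rmax PSW R)\<rfloor> \<and> i < m \<longrightarrow> book m j i \<in> What" and
    lim: "liminf (\<lambda>m. neg_log_rate m
        (measure (PiM {..<m} (\<lambda>_. PSW))
          {x \<in> space (PiM {..<m} (\<lambda>_. PSW)).
             \<forall>j \<in> {1..nat \<lfloor>exp (real m * Rmax PSW R)\<rfloor>}.
               real j \<le> exp (\<Sum>i<m. R (x i)) \<longrightarrow>
               distortion_m \<mu> n loss m (\<lambda>i. snd (x i)) (book m j) (\<lambda>i. fst (x i)) > \<epsilon>}))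
       \<ge> ereal (ln (1 / \<delta>))"
    unfolding compressible_def by blast
  define Pm where "Pm m = PiM {..<m} (\<lambda>_::nat. PSW)" for m
  define N where "N m = nat \<lfloor>exp (real m * K)\<rfloor>" for m
  define E where "E m = {x \<in> space (Pm m).
             \<forall>j \<in> {1..N m}.
               real j \<le> exp (\<Sum>i<m. R (x i)) \<longrightarrow>
               distortion_m \<mu> n loss m (\<lambda>i. snd (x i)) (book m j) (\<lambda>i. fst (x i)) > \<epsilon>}" for m
  have lim': "ereal (ln (1 / \<delta>)) \<le> liminf (\<lambda>m. neg_log_rate m (measure (Pm m) (E m)))"
    using lim unfolding E_def Pm_def N_def K_def by simp
  have bw: "book m j i \<in> space MW" if "j \<in> {1..N m}" "i < m" for m j i
    using bk A(6) that unfolding N_def K_def by auto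
  have key: "(measure PSW B) ^ m \<le> measure (Pm m) (E m) + \<delta> ^ m * (1 + real m * K)" if m1: "m \<ge> 1" for m
  proof -
    interpret Pm: prob_space "Pm m" unfolding Pm_def by (rule prob_space_PiM) (rule A(3))
    interpret PP: product_sigma_finite "\<lambda>_::nat. PSW"
      by (simp add: product_sigma_finite_def PSW.sigma_finite_measure_axioms)
    define F where "F j = {x \<in> space (Pm m). real j * (sqrt (2 * real n) / \<delta>) ^ m
        \<le> exp (lam * (\<Sum>i<m. (gen \<mu> n loss (fst (x i)) (book m j i))\<^sup>2))}" for j
    have Fm: "F j \<in> sets (Pm m)" if j: "j \<in> {1..N m}" for j
    proof -
      have "(\<lambda>x. \<Sum>i<m. (gen \<mu> n loss (fst (x i)) (book m j i))\<^sup>2) \<in> borel_measurable (Pm m)"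
        unfolding Pm_def using genw[OF bw[OF j]]
        by (intro sum_comp_meas[where f = "\<lambda>i p. (gen \<mu> n loss (fst p) (book m j i))\<^sup>2"]) auto
      then show ?thesis unfolding F_def by measurable
    qed
    have Em: "E m \<in> sets (Pm m)"
    proof -
      have compx: "(\<lambda>x. x i) \<in> measurable (Pm m) PSW" if "i < m" for i
        unfolding Pm_def using that by (intro measurable_component_singleton) auto
      have sR[measurable]: "(\<lambda>x. \<Sum>i<m. R (x i)) \<in> borel_measurable (Pm m)"
        unfolding Pm_def by (intro sum_comp_meas) auto
      have dm[measurable]: "(\<lambda>x. distortion_m \<mu> n loss m (\<lambda>i. snd (x i)) (book m j) (\<lambda>i. fst (x i)))
         \<in> borel_measurable (Pm m)" if j: "j \<in> {1..N m}" for j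
      proof -
        have "(\<lambda>x. \<Sum>i<m. (gen \<mu> n loss (fst (x i)) (snd (x i)))\<^sup>2 - (gen \<mu> n loss (fst (x i)) (book m j i))\<^sup>2)
           \<in> borel_measurable (Pm m)"
          unfolding Pm_def using genw[OF bw[OF j]] genm
          by (intro sum_comp_meas[where f = "\<lambda>i p. (gen \<mu> n loss (fst p) (snd p))\<^sup>2 - (gen \<mu> n loss (fst p) (book m j i))\<^sup>2"]) auto
        then show ?thesis unfolding distortion_m_def distortion_def by measurable
      qed
      show ?thesis unfolding E_def
        by (intro predE pred_intros_finite pred_intros_logic) (measurable, auto intro: dm compx)
    qed
    have cover: "PiE {..<m} (\<lambda>_. B) \<subseteq> E m \<union> (\<Union>j\<in>{1..N m}. F j)"
    proof
      fix x assume x: "x \<in> PiE {..<m} (\<lambda>_. B)"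
      have xs: "x \<in> space (Pm m)" using x unfolding Pm_def B_def by (auto simp: space_PiM PiE_iff)
      show "x \<in> E m \<union> (\<Union>j\<in>{1..N m}. F j)"
      proof (cases "x \<in> E m")
        case True then show ?thesis by simp
      next
        case False
        then obtain j where j: "j \<in> {1..N m}" and jle: "real j \<le> exp (\<Sum>i<m. R (x i))"
          and dl: "\<not> \<epsilon> < distortion_m \<mu> n loss m (\<lambda>i. snd (x i)) (book m j) (\<lambda>i. fst (x i))"
          using xs unfolding E_def by auto
        define g where "g i = gen \<mu> n loss (fst (x i)) (snd (x i))" for i
        define h where "h i = gen \<mu> n loss (fst (x i)) (book m j i)" for i
        have "(\<Sum>i<m. (g i)\<^sup>2 - (h i)\<^sup>2) / real m \<le> \<epsilon>"
          using dl unfolding distortion_m_def distortion_def g_def h_def by simp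
        then have d: "(\<Sum>i<m. (g i)\<^sup>2) - (\<Sum>i<m. (h i)\<^sup>2) \<le> real m * \<epsilon>"
          using m1 by (simp add: pos_divide_le_eq sum_subtractf mult.commute)
        have xb: "X (x i) < (g i)\<^sup>2" if "i < m" for i
          using x that unfolding B_def g_def by (auto simp: PiE_iff)
        have sg: "(\<Sum>i<m. X (x i)) \<le> (\<Sum>i<m. (g i)\<^sup>2)"
          by (intro sum_mono) (use xb in force)
        define c where "c = 4 * \<sigma>\<^sup>2 / (2 * real n - 1)"
        have Xc: "X p = c * (R p + a) + \<epsilon>" for p unfolding X_def c_def by simp
        have sX: "(\<Sum>i<m. X (x i)) = c * ((\<Sum>i<m. R (x i)) + real m * a) + real m * \<epsilon>"
          by (simp add: Xc sum.distrib sum_distrib_left[symmetric])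
        have c1: "lam * c = 1" unfolding lam_def c_def using A(14) n1 by (simp add: field_simps)
        have lam0: "lam > 0" unfolding lam_def using A(14) n1 by simp
        have "c * ((\<Sum>i<m. R (x i)) + real m * a) \<le> (\<Sum>i<m. (h i)\<^sup>2)"
          using sg sX d by linarith
        then have "lam * (c * ((\<Sum>i<m. R (x i)) + real m * a)) \<le> lam * (\<Sum>i<m. (h i)\<^sup>2)"
          using lam0 by (intro mult_left_mono) auto
        then have le: "(\<Sum>i<m. R (x i)) + real m * a \<le> lam * (\<Sum>i<m. (h i)\<^sup>2)"
          using c1 by (simp add: mult.assoc[symmetric])
        have "real j * (sqrt (2 * real n) / \<delta>) ^ m \<le> exp (\<Sum>i<m. R (x i)) * exp a ^ m"
          using jle unfolding ea by (intro mult_right_mono) (use A(12) in auto)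
        also have "\<dots> = exp ((\<Sum>i<m. R (x i)) + real m * a)"
          by (simp add: exp_add exp_of_nat_mult)
        also have "\<dots> \<le> exp (lam * (\<Sum>i<m. (h i)\<^sup>2))" using le by simp
        finally have "x \<in> F j" using xs unfolding F_def h_def by simp
        then show ?thesis using j by blast
      qed
    qed
    have PB: "measure (Pm m) (PiE {..<m} (\<lambda>_. B)) = (measure PSW B) ^ m"
    proof -
      have "ennreal (measure (Pm m) (PiE {..<m} (\<lambda>_. B))) = emeasure (Pm m) (PiE {..<m} (\<lambda>_. B))"
        using Bm by (simp add: Pm.emeasure_eq_measure)
      also have "\<dots> = (\<Prod>i<m. emeasure PSW B)"
        unfolding Pm_def using Bm by (intro PP.emeasure_PiM) auto
      also have "\<dots> = ennreal ((measure PSW B) ^ m)"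
        by (simp add: PSW.emeasure_eq_measure ennreal_power)
      finally show ?thesis by simp
    qed
    have FB: "measure (Pm m) (F j) \<le> \<delta> ^ m / real j" if j: "j \<in> {1..N m}" for j
    proof -
      define T where "T = real j * (sqrt (2 * real n) / \<delta>) ^ m"
      have T0: "T > 0" using j A(12) n1 by (auto simp: T_def)
      define f where "f i p = ennreal (exp (lam * (gen \<mu> n loss (fst p) (book m j i))\<^sup>2))" for i and p :: "(nat \<Rightarrow> 'z) \<times> 'w"
      have fm: "f i \<in> borel_measurable PSW" if "i < m" for i
        using genw[OF bw[OF j that]] unfolding f_def by measurable
      have fb: "integral\<^sup>N PSW (f i) \<le> ennreal (sqrt (2 * real n))" if i: "i < m" for i
      proof -
        define w where "w = book m j i"
        have w: "w \<in> space MW" using bw[OF j i] by (simp add: w_def)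
        define g where "g s = ennreal (exp (lam * (gen \<mu> n loss s w)\<^sup>2))" for s
        have gm: "g \<in> borel_measurable Mn"
        proof -
          note [measurable] = loss_w[OF w]
          show ?thesis unfolding g_def gen_def emp_risk_def Mn_def by measurable
        qed
        have "integral\<^sup>N PSW (f i) = (\<integral>\<^sup>+p. g (fst p) \<partial>PSW)"
          unfolding f_def[abs_def] g_def w_def by simp
        also have "\<dots> = integral\<^sup>N (distr PSW Mn fst) g"
          by (rule nn_integral_distr[OF fstm, symmetric]) (use gm A(5) in \<open>simp add: Mn_def\<close>)
        also have "\<dots> = integral\<^sup>N Mn g" using A(5) by (simp add: Mn_def)
        also have "\<dots> \<le> ennreal (sqrt (2 * real n))"
          unfolding g_def Mn_def lam_def
          by (rule gen_sq_bound[of \<mu> n \<sigma> loss w, OF A(1) A(2) A(14) loss_w[OF w]]) (use A(16) w in auto)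
        finally show ?thesis .
      qed
      have int: "(\<integral>\<^sup>+x. ennreal (exp (lam * (\<Sum>i<m. (gen \<mu> n loss (fst (x i)) (book m j i))\<^sup>2))) \<partial>Pm m)
          \<le> ennreal (sqrt (2 * real n) ^ m)"
      proof -
        have eq: "ennreal (exp (lam * (\<Sum>i<m. (gen \<mu> n loss (fst (x i)) (book m j i))\<^sup>2))) = (\<Prod>i<m. f i (x i))" for x
        proof -
          have "exp (lam * (\<Sum>i<m. (gen \<mu> n loss (fst (x i)) (book m j i))\<^sup>2))
              = (\<Prod>i<m. exp (lam * (gen \<mu> n loss (fst (x i)) (book m j i))\<^sup>2))"
            by (simp add: sum_distrib_left exp_sum)
          then show ?thesis unfolding f_def by (simp add: prod_ennreal)
        qed
        have "(\<integral>\<^sup>+x. ennreal (exp (lam * (\<Sum>i<m. (gen \<mu> n loss (fst (x i)) (book m j i))\<^sup>2))) \<partial>Pm m)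
            = (\<integral>\<^sup>+x. (\<Prod>i<m. f i (x i)) \<partial>Pm m)" by (simp add: eq)
        also have "\<dots> = (\<Prod>i<m. integral\<^sup>N PSW (f i))"
          unfolding Pm_def by (rule PP.product_nn_integral_prod) (auto intro: fm)
        also have "\<dots> \<le> ennreal (sqrt (2 * real n)) ^ card {..<m}"
          by (rule ennreal_prod_le_pow) (auto intro: fb)
        also have "\<dots> = ennreal (sqrt (2 * real n) ^ m)" by (simp add: ennreal_power)
        finally show ?thesis .
      qed
      have "ennreal T * emeasure (Pm m) (F j) = (\<integral>\<^sup>+x. ennreal T * indicator (F j) x \<partial>Pm m)"
        by (simp add: nn_integral_cmult_indicator Fm[OF j])
      also have "\<dots> \<le> (\<integral>\<^sup>+x. ennreal (exp (lam * (\<Sum>i<m. (gen \<mu> n loss (fst (x i)) (book m j i))\<^sup>2))) \<partial>Pm m)"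
        by (intro nn_integral_mono) (auto simp: F_def T_def indicator_def intro: ennreal_leI)
      also note int
      finally have "ennreal (T * measure (Pm m) (F j)) \<le> ennreal (sqrt (2 * real n) ^ m)"
        using T0 by (simp add: Pm.emeasure_eq_measure ennreal_mult)
      then have "T * measure (Pm m) (F j) \<le> sqrt (2 * real n) ^ m"
        by (simp add: ennreal_le_iff)
      then have "measure (Pm m) (F j) \<le> sqrt (2 * real n) ^ m / T"
        using T0 by (simp add: pos_le_divide_eq mult.commute)
      also have "sqrt (2 * real n) ^ m / T = \<delta> ^ m / real j"
        unfolding T_def using A(12) n1 j by (simp add: power_divide field_simps)
      finally show ?thesis .
    qed
    have harm: "(\<Sum>j\<in>{1..N m}. \<delta> ^ m / real j) \<le> \<delta> ^ m * (1 + real m * K)"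
    proof (cases "N m = 0")
      case True then show ?thesis using A(12) K0 by simp
    next
      case False
      have "(\<Sum>j\<in>{1..N m}. \<delta> ^ m / real j) = \<delta> ^ m * harm (N m)"
        by (simp add: harm_def sum_distrib_left divide_inverse)
      also have "harm (N m) \<le> 1 + real m * K"
      proof -
        have h1: "harm (1::nat) = (1::real)" by (simp add: harm_def)
        have "harm (N m) - ln (real (N m)) \<le> harm (1::nat) - ln (real (1::nat))"
          using euler_mascheroni_sequence_decreasing[of 1 "N m"] False by simp
        then have hh: "harm (N m) \<le> 1 + ln (real (N m))" using h1 by simp
        have "real (N m) \<le> exp (real m * K)"
        proof -
          have "real (N m) = real_of_int \<lfloor>exp (real m * K)\<rfloor>" unfolding N_def by simp
          also have "\<dots> \<le> exp (real m * K)" by (rule of_int_floor_le)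
          finally show ?thesis .
        qed
        then have "ln (real (N m)) \<le> real m * K" using False
          by (metis ln_exp ln_le_cancel_iff exp_gt_zero of_nat_0_less_iff bot_nat_0.not_eq_extremum)
        then show ?thesis using hh by simp
      qed
      then have "\<delta> ^ m * harm (N m) \<le> \<delta> ^ m * (1 + real m * K)"
        using A(12) by (intro mult_left_mono) auto
      finally show ?thesis .
    qed
    have "(measure PSW B) ^ m = measure (Pm m) (PiE {..<m} (\<lambda>_. B))" using PB by simp
    also have "\<dots> \<le> measure (Pm m) (E m \<union> (\<Union>j\<in>{1..N m}. F j))"
      using cover Em Fm by (intro Pm.finite_measure_mono) auto
    also have "\<dots> \<le> measure (Pm m) (E m) + measure (Pm m) (\<Union>j\<in>{1..N m}. F j)"
      using Em Fm by (intro measure_subadditive) (auto simp: Pm.emeasure_eq_measure)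
    also have "measure (Pm m) (\<Union>j\<in>{1..N m}. F j) \<le> (\<Sum>j\<in>{1..N m}. measure (Pm m) (F j))"
      using Fm by (intro Pm.finite_measure_subadditive_finite) auto
    also have "\<dots> \<le> (\<Sum>j\<in>{1..N m}. \<delta> ^ m / real j)"
      using FB by (intro sum_mono) auto
    also note harm
    finally show ?thesis by simp
  qed
  have mB: "measure PSW B \<le> \<delta>"
  proof (rule ccontr)
    assume "\<not> ?thesis"
    then have pd: "measure PSW B > \<delta>" by simp
    define p where "p = measure PSW B"
    define r where "r = p / \<delta>"
    define q where "q = (1 + r) / 2"
    have r1: "r > 1" using pd A(12) by (simp add: r_def p_def field_simps)
    have q1: "q > 1" "q < r" using r1 by (auto simp: q_def)
    have pr: "p = \<delta> * r" using A(12) by (simp add: r_def)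
    have "ereal (ln (1/\<delta>) - ln q) < ereal (ln (1/\<delta>))" using q1 by simp
    with lim' have ev: "eventually (\<lambda>m. ereal (ln (1/\<delta>) - ln q) < neg_log_rate m (measure (Pm m) (E m))) sequentially"
      by (simp add: le_Liminf_iff)
    then obtain M0 where M0: "\<And>m. m \<ge> M0 \<Longrightarrow> ereal (ln (1/\<delta>) - ln q) < neg_log_rate m (measure (Pm m) (E m))"
      by (auto simp: eventually_sequentially)
    define t where "t = r / q"
    define sq where "sq = sqrt t"
    define d where "d = sq - 1"
    have t1: "t > 1" using q1 by (simp add: t_def)
    have d0: "d > 0" using t1 by (simp add: d_def sq_def)
    have rtq: "r = t * q" using q1 by (simp add: t_def)
    define m where "m = max (max M0 1) (nat \<lceil>(2 + K) / d\<^sup>2\<rceil> + 1)"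
    have m1: "m \<ge> 1" "m \<ge> M0" by (auto simp: m_def)
    have mbig: "real m * d\<^sup>2 > 2 + K"
    proof -
      have "(2 + K) / d\<^sup>2 \<le> real (nat \<lceil>(2 + K) / d\<^sup>2\<rceil>)" by linarith
      also have "\<dots> < real m" by (simp add: m_def)
      finally show ?thesis using d0 by (simp add: pos_divide_less_eq)
    qed
    have PE: "measure (Pm m) (E m) \<le> (\<delta> * q) ^ m"
    proof (cases "measure (Pm m) (E m) = 0")
      case True then show ?thesis using A(12) q1 by simp
    next
      case False
      define P where "P = measure (Pm m) (E m)"
      have P0: "P > 0" using False measure_nonneg[of "Pm m" "E m"] unfolding P_def by linarith
      have "ereal (ln (1/\<delta>) - ln q) < ereal (- ln P / real m)"
        using M0[OF m1(2)] False by (simp add: neg_log_rate_def P_def)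
      then have "ln (1/\<delta>) - ln q < - ln P / real m" by simp
      then have "real m * (ln (1/\<delta>) - ln q) < - ln P" using m1 by (simp add: field_simps)
      moreover have "ln (1/\<delta>) = - ln \<delta>" using A(12) by (simp add: ln_div)
      moreover have "ln (\<delta> * q) = ln \<delta> + ln q" using A(12) q1 by (simp add: ln_mult)
      ultimately have "ln P < real m * ln (\<delta> * q)" by (simp add: algebra_simps)
      also have "\<dots> = ln ((\<delta> * q) ^ m)" using A(12) q1 by (simp add: ln_realpow)
      finally have "ln P < ln ((\<delta> * q) ^ m)" .
      then show ?thesis using P0 A(12) q1 by (simp add: P_def)
    qed
    have "p ^ m \<le> (\<delta> * q) ^ m + \<delta> ^ m * (1 + real m * K)"
      using key[OF m1(1)] PE by (simp add: p_def)
    then have "\<delta> ^ m * r ^ m \<le> \<delta> ^ m * (q ^ m + (1 + real m * K))"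
      by (simp add: pr power_mult_distrib algebra_simps)
    then have "r ^ m \<le> q ^ m + (1 + real m * K)"
      using A(12) by (simp add: mult_le_cancel_left_pos)
    also have "\<dots> \<le> q ^ m + q ^ m * (1 + real m * K)"
    proof -
      have "1 \<le> q ^ m" using q1 by simp
      then have "1 * (1 + real m * K) \<le> q ^ m * (1 + real m * K)"
        using K0 by (intro mult_right_mono) auto
      then show ?thesis by simp
    qed
    finally have "q ^ m * t ^ m \<le> q ^ m * (2 + real m * K)"
      by (simp add: rtq power_mult_distrib algebra_simps)
    then have tm: "t ^ m \<le> 2 + real m * K"
      using q1 by (simp add: mult_le_cancel_left_pos)
    have "1 + real m * d \<le> (1 + d) ^ m"
      using Bernoulli_inequality[of d m] d0 by simp
    then have "(1 + real m * d)\<^sup>2 \<le> ((1 + d) ^ m)\<^sup>2"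
      using d0 by (intro power_mono) auto
    also have "((1 + d) ^ m)\<^sup>2 = t ^ m"
      using t1 by (simp add: d_def sq_def power_mult[symmetric] mult.commute[of m] power_mult)
    finally have h1: "(1 + real m * d)\<^sup>2 \<le> t ^ m" .
    have "(real m * d)\<^sup>2 < (1 + real m * d)\<^sup>2"
      using d0 by (intro power_strict_mono) auto
    moreover have "(real m * d)\<^sup>2 = real m * (real m * d\<^sup>2)" by (simp add: power2_eq_square)
    moreover have "real m * (2 + K) \<le> real m * (real m * d\<^sup>2)"
      using mbig by (intro mult_left_mono) auto
    moreover have "2 + real m * K \<le> real m * (2 + K)"
      using m1 by (simp add: algebra_simps)
    ultimately show False using h1 tm by linarith
  qed
  define G where "G = {(s, w) \<in> space PSW.
            gen \<mu> n loss s w \<le> sqrt (4 * \<sigma>\<^sup>2 * (R (s, w) + ln (sqrt (2 * real n) / \<delta>)) / (2 * real n - 1) + \<epsilon>)}"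
  have G': "G = {p \<in> space PSW. gen \<mu> n loss (fst p) (snd p) \<le> sqrt (X p)}"
    unfolding G_def X_def a_def by auto
  have Gm: "G \<in> sets PSW" unfolding G' X_def by measurable
  have "space PSW - G \<subseteq> B"
  proof
    fix p assume p: "p \<in> space PSW - G"
    then have g: "sqrt (X p) < gen \<mu> n loss (fst p) (snd p)" unfolding G' by auto
    have "X p < (gen \<mu> n loss (fst p) (snd p))\<^sup>2"
    proof (cases "X p \<ge> 0")
      case True
      then have "(sqrt (X p))\<^sup>2 < (gen \<mu> n loss (fst p) (snd p))\<^sup>2"
        using g by (intro power_strict_mono) auto
      then show ?thesis using True by simp
    next
      case False
      then show ?thesis by (smt (verit) zero_le_power2)
    qed
    then show "p \<in> B" using p unfolding B_def by auto
  qed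
  then have "measure PSW (space PSW - G) \<le> measure PSW B"
    using Bm by (rule PSW.finite_measure_mono)
  then have "1 - measure PSW G \<le> \<delta>" using PSW.prob_compl[OF Gm] mB by simp
  then show ?thesis unfolding G_def by simp
qed

end
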